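(* Let a trained classification model have feature space $\Phi\subseteq\mathbb{R}^f$ and produce logits $z=Wx_\phi+b$ for a feature vector $x_\phi\in\Phi$, where $W\in\mathbb{R}^{n\times f}$, $b\in\mathbb{R}^n$, $n$ the number of classes. Let $x$ be an input whose feature vector $x_\phi$ has distance at most $\delta$ from the closest decision boundary in $\Phi$, i.e. $d^{f,\min}_\phi(x)\le\delta$. Then $$\max\mathrm{softmax}(Wx_\phi+b)\;\le\;\frac{e^{\delta\rho'(W)}}{e^{\delta\rho'(W)}+1},\qquad \rho'(W)=\max_{i\ne j,\ i,j\in\{1,\dots,n\}}\|W[j]-W[i]\|_2.$$
   Context: $W[k]$ denotes the $k$-th row of $W$. The classification of an input is the index of its largest logit. The decision boundary between classes $i$ and $j$ is the set of $y\in\Phi$ with $W[i]y+b[i]=W[j]y+b[j]\ge W[k]y+b[k]$ for all $k\notin\{i,j\}$; $d^{f,\min}_\phi(x)$ is the Euclidean distance from $x_\phi$ to the union of the decision boundaries between the class of $x$ and the other classes. $\mathrm{softmax}(z)[k]=e^{z[k]}/\sum_{l}e^{z[l]}$. *)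

theory Defs
  imports "HOL-Analysis.Analysis"
begin

definition logits :: "real^'f^'n \<Rightarrow> real^'n \<Rightarrow> real^'f \<Rightarrow> real^'n" where
  "logits W b x = W *v x + b"

definition softmax :: "real^'n::finite \<Rightarrow> real^'n" where
  "softmax z = (\<chi> k. exp (z $ k) / (\<Sum>l\<in>UNIV. exp (z $ l)))"

definition is_class :: "real^'f^'n \<Rightarrow> real^'n \<Rightarrow> real^'f \<Rightarrow> 'n \<Rightarrow> bool" where
  "is_class W b x c \<longleftrightarrow> (\<forall>k. logits W b x $ k \<le> logits W b x $ c)"

definition decision_boundary ::
  "(real^'f) set \<Rightarrow> real^'f^'n \<Rightarrow> real^'n \<Rightarrow> 'n \<Rightarrow> 'n \<Rightarrow> (real^'f) set" where
  "decision_boundary Phi W b i j =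
     {y \<in> Phi. (W $ i) \<bullet> y + b $ i = (W $ j) \<bullet> y + b $ j \<and>
        (\<forall>k. k \<noteq> i \<and> k \<noteq> j \<longrightarrow> (W $ k) \<bullet> y + b $ k \<le> (W $ i) \<bullet> y + b $ i)}"

text \<open>Euclidean distance from x_phi to the union of the decision boundaries between
  class c and the other classes (infimum; +infinity if that union is empty).\<close>
definition d_min ::
  "(real^'f) set \<Rightarrow> real^'f^'n \<Rightarrow> real^'n \<Rightarrow> 'n \<Rightarrow> real^'f \<Rightarrow> ereal" where
  "d_min Phi W b c x = (INF y \<in> (\<Union>j\<in>{j. j \<noteq> c}. decision_boundary Phi W b c j). ereal (dist x y))"

definition rho' :: "real^'f^'n::finite \<Rightarrow> real" where
  "rho' W = Max {norm (W $ j - W $ i) | i j. i \<noteq> j}"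

end

theory Submission
  imports Defs
begin

lemma rho'_ge:
  fixes W :: "real^'f^'n"
  assumes "i \<noteq> j"
  shows "norm (W $ j - W $ i) \<le> rho' W"
proof -
  have "{norm (W $ j - W $ i) | i j. i \<noteq> j} \<subseteq> (\<lambda>(i,j). norm (W $ j - W $ i)) ` UNIV"
    by auto
  hence fin: "finite {norm (W $ j - W $ i) | i j. i \<noteq> j}"
    by (rule finite_subset) simp
  show ?thesis unfolding rho'_def
    by (rule Max_ge[OF fin]) (use assms in blast)
qed

lemma key:
  fixes W :: "real^'f^'n"
  assumes "y \<in> decision_boundary Phi W b c j" "j \<noteq> c"
  shows "logits W b x $ c - logits W b x $ j \<le> rho' W * dist x y"
proof -
  have y: "(W $ c) \<bullet> y + b $ c = (W $ j) \<bullet> y + b $ j"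
    using assms(1) unfolding decision_boundary_def by auto
  have "logits W b x $ c - logits W b x $ j = (W $ c - W $ j) \<bullet> (x - y)"
    unfolding logits_def using y
    by (simp add: matrix_vector_mul_component inner_diff_left inner_diff_right)
  also have "\<dots> \<le> norm (W $ c - W $ j) * norm (x - y)"
    by (rule norm_cauchy_schwarz)
  also have "\<dots> \<le> rho' W * dist x y"
    using rho'_ge[of j c W] assms(2) by (simp add: dist_norm mult_right_mono)
  finally show ?thesis .
qed

theorem theorem2:
  fixes Phi :: "(real^'f) set" and W :: "real^'f^'n" and b :: "real^'n"
    and x :: "real^'f" and c :: 'n and \<delta> :: real
  assumes "x \<in> Phi"
    and "is_class W b x c"
    and "d_min Phi W b c x \<le> ereal \<delta>"
  shows "Max (range (\<lambda>k. softmax (logits W b x) $ k))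
           \<le> exp (\<delta> * rho' W) / (exp (\<delta> * rho' W) + 1)"
proof -
  let ?L = "logits W b x"
  let ?U = "\<Union>j\<in>{j. j \<noteq> c}. decision_boundary Phi W b c j"
  have ex: "\<exists>j. j \<noteq> c \<and> ?L $ c - ?L $ j \<le> rho' W * \<delta>"
  proof (rule ccontr)
    assume "\<not> ?thesis"
    hence gt: "\<And>j. j \<noteq> c \<Longrightarrow> ?L $ c - ?L $ j > rho' W * \<delta>" by force
    have Une: "?U \<noteq> {}"
    proof
      assume "?U = {}"
      hence "d_min Phi W b c x = top" unfolding d_min_def by simp
      with assms(3) show False by (simp add: top_ereal_def)
    qed
    then obtain j0 y0 where j0: "j0 \<noteq> c" "y0 \<in> decision_boundary Phi W b c j0" by blast
    have rho0: "rho' W \<ge> 0" using rho'_ge[OF j0(1), of W] by (meson norm_ge_zero order_trans)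
    let ?S = "{?L $ c - ?L $ j | j. j \<noteq> c}"
    have finS: "finite ?S"
    proof -
      have "?S \<subseteq> (\<lambda>j. ?L $ c - ?L $ j) ` UNIV" by blast
      thus ?thesis by (rule finite_subset) simp
    qed
    have neS: "?S \<noteq> {}" using j0 by blast
    define m where "m = Min ?S"
    have mgt: "m > rho' W * \<delta>"
      unfolding m_def using finS neS
    proof (subst Min_gr_iff)
      show "\<forall>a\<in>?S. rho' W * \<delta> < a" using gt by blast
    qed
    have mle: "\<And>j. j \<noteq> c \<Longrightarrow> m \<le> ?L $ c - ?L $ j"
      unfolding m_def using finS by (intro Min_le) blast+
    have bnd: "\<And>y. y \<in> ?U \<Longrightarrow> m \<le> rho' W * dist x y"
    proof -
      fix y assume "y \<in> ?U"
      then obtain j where "j \<noteq> c" "y \<in> decision_boundary Phi W b c j" by blast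
      from mle[OF this(1)] key[OF this(2) this(1), of x] show "m \<le> rho' W * dist x y" by simp
    qed
    have rpos: "rho' W > 0"
    proof (rule ccontr)
      assume "\<not> rho' W > 0"
      hence "rho' W = 0" using rho0 by simp
      with mgt bnd[of y0] j0 show False by auto
    qed
    have "ereal (m / rho' W) \<le> d_min Phi W b c x"
      unfolding d_min_def
    proof (rule INF_greatest)
      fix y assume "y \<in> ?U"
      from bnd[OF this] rpos show "ereal (m / rho' W) \<le> ereal (dist x y)"
        by (simp add: divide_le_eq mult.commute)
    qed
    moreover have "m / rho' W > \<delta>" using mgt rpos by (simp add: less_divide_eq mult.commute)
    ultimately have "ereal (m / rho' W) \<le> ereal \<delta>" using assms(3) by (meson order_trans)
    hence "m / rho' W \<le> \<delta>" by simp
    with \<open>m / rho' W > \<delta>\<close> show False by simp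
  qed
  then obtain j where j: "j \<noteq> c" "?L $ c - ?L $ j \<le> rho' W * \<delta>" by blast
  define S where "S = (\<Sum>l\<in>UNIV. exp (?L $ l))"
  have S: "exp (?L $ c) + exp (?L $ j) \<le> S"
  proof -
    have "(\<Sum>l\<in>{c,j}. exp (?L $ l)) \<le> S"
      unfolding S_def by (rule sum_mono2) auto
    thus ?thesis using j(1) by simp
  qed
  let ?r = "\<delta> * rho' W"
  have Spos: "S > 0" using S exp_gt_zero[of "?L $ c"] exp_gt_zero[of "?L $ j"] by linarith
  have main: "exp (?L $ c) / S \<le> exp ?r / (exp ?r + 1)"
  proof -
    have "exp (?L $ c) / S \<le> exp (?L $ c) / (exp (?L $ c) + exp (?L $ j))"
      using S Spos by (intro divide_left_mono) (auto intro!: mult_pos_pos add_pos_pos)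
    also have "\<dots> \<le> exp ?r / (exp ?r + 1)"
    proof -
      have "exp (?L $ c) \<le> exp (?r + ?L $ j)" using j(2) by (simp add: mult.commute)
      hence "exp (?L $ c) * (exp ?r + 1) \<le> exp ?r * (exp (?L $ c) + exp (?L $ j))"
        by (simp add: exp_add algebra_simps)
      thus ?thesis by (simp add: divide_simps add_pos_pos)
    qed
    finally show ?thesis .
  qed
  show ?thesis
  proof (subst Max_le_iff)
    show "\<forall>a\<in>range (\<lambda>k. softmax ?L $ k). a \<le> exp ?r / (exp ?r + 1)"
    proof
      fix a assume "a \<in> range (\<lambda>k. softmax ?L $ k)"
      then obtain k where a: "a = softmax ?L $ k" by blast
      have "a = exp (?L $ k) / S" unfolding a softmax_def S_def by simp
      also have "\<dots> \<le> exp (?L $ c) / S"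
        using assms(2) Spos unfolding is_class_def by (intro divide_right_mono) auto
      finally show "a \<le> exp ?r / (exp ?r + 1)" using main by simp
    qed
  qed auto
qed

end
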